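(* Let $1<\alpha<2$, $\omega(x)=x^{\alpha/2}(1-x)^{\alpha/2}$, $G_j(x)=G_j(1+\alpha,1+\alpha/2,x)$, $\lambda_j=-\cos(\pi\alpha/2)\frac{\Gamma(j+1+\alpha)}{\Gamma(j+1)}$. Let $f\in L^2_{\omega}(0,1)$, $f_j=\int_0^1\omega G_j f\,dx$, $u_N=\omega\sum_{j=0}^N \frac{f_j}{\lambda_j\|G_j\|_\omega^2}G_j$ and $u=\omega\sum_{j=0}^\infty \frac{f_j}{\lambda_j\|G_j\|_\omega^2}G_j$ (the limit of $u_N$ in $L^2_{\omega^{-1}}(0,1)$, which solves $\mathcal{L}_{1/2}^{\alpha}u=f$). Then there exists $C>0$ such that for all $N\ge0$, \[ \|u-u_N\|_{\omega^{-1}}\le\frac{1}{\lambda_{N+1}}\|f\|_{\omega}\le C\,(N+2)^{-\alpha}\,\|f\|_{\omega}. \]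
   Context: Let $D=d/dx$. For $\sigma>0$: $\mathbf{D}^{-\sigma}u(x)=\frac{1}{\Gamma(\sigma)}\int_0^x (x-s)^{\sigma-1}u(s)\,ds$, $\mathbf{D}^{-\sigma*}u(x)=\frac{1}{\Gamma(\sigma)}\int_x^1 (s-x)^{\sigma-1}u(s)\,ds$. For $1<\alpha<2$, $\mathbf{D}^{\alpha}u:=D\,\mathbf{D}^{-(2-\alpha)}Du$, $\mathbf{D}^{\alpha*}u:=D\,\mathbf{D}^{-(2-\alpha)*}Du$, $\mathcal{L}_r^{\alpha}u:=-(r\mathbf{D}^{\alpha}u+(1-r)\mathbf{D}^{\alpha*}u)$. Jacobi polynomials on $(0,1)$: $G_n(p,q,x)=\sum_{j=0}^n g_{n,j}x^j$, $g_{n,j}=(-1)^{n-j}\frac{\Gamma(q+n)}{\Gamma(p+2n)}\frac{\Gamma(n+1)}{\Gamma(j+1)\Gamma(n-j+1)}\frac{\Gamma(p+n+j)}{\Gamma(q+j)}$. For a weight $\rho>0$ on $(0,1)$, $L^2_\rho(0,1)=\{f:\int_0^1\rho f^2<\infty\}$ with norm $\|f\|_\rho=(\int_0^1\rho f^2)^{1/2}$. *)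

theory Defs
  imports "HOL-Analysis.Analysis"
begin

definition jacobiG :: "real \<Rightarrow> real \<Rightarrow> nat \<Rightarrow> real \<Rightarrow> real" where
  "jacobiG p q n x = (\<Sum>j\<le>n. (-1) ^ (n - j)
       * (Gamma (q + real n) / Gamma (p + 2 * real n))
       * (Gamma (real n + 1) / (Gamma (real j + 1) * Gamma (real (n - j) + 1)))
       * (Gamma (p + real n + real j) / Gamma (q + real j))
       * x ^ j)"

definition in_L2w :: "(real \<Rightarrow> real) \<Rightarrow> (real \<Rightarrow> real) \<Rightarrow> bool" where
  "in_L2w \<rho> f \<longleftrightarrow> set_borel_measurable lborel {0<..<1} f
      \<and> set_integrable lborel {0<..<1} (\<lambda>x. \<rho> x * (f x)\<^sup>2)"

definition wnorm :: "(real \<Rightarrow> real) \<Rightarrow> (real \<Rightarrow> real) \<Rightarrow> real" where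
  "wnorm \<rho> f = sqrt (LINT x:{0<..<1}|lborel. \<rho> x * (f x)\<^sup>2)"

end

theory Submission
  imports Defs "HOL-Computational_Algebra.Polynomial"
begin


lemma shift_degree_less:
  fixes P :: "real poly"
  assumes "degree P > 0"
  shows "degree (P - pcompose P [:1,1:]) < degree P"
proof (cases "P - pcompose P [:1,1:] = 0")
  case True then show ?thesis using assms by simp
next
  case False
  have d: "degree (pcompose P [:1,1:]) = degree P" by (simp add: degree_pcompose)
  have l: "lead_coeff (pcompose P [:1,1:]) = lead_coeff P" by (simp add: lead_coeff_comp)
  show ?thesis
    apply (rule degree_less_if_less_eqI)
    using d l False by (auto intro: degree_diff_le)
qed

lemma fin_diff_step:
  fixes f :: "nat \<Rightarrow> real"
  shows "(\<Sum>j\<le>Suc n. (-1)^j * real (Suc n choose j) * f j)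
      = (\<Sum>j\<le>n. (-1)^j * real (n choose j) * (f j - f (Suc j)))"
proof -
  have A: "(\<Sum>j\<le>Suc n. (-1)^j * real (Suc n choose j) * f j)
     = f 0 + (\<Sum>i\<le>n. (-1)^Suc i * real (n choose i) * f (Suc i))
           + (\<Sum>i\<le>n. (-1)^Suc i * real (n choose Suc i) * f (Suc i))"
    by (subst sum.atMost_Suc_shift) (simp add: sum.distrib[symmetric] algebra_simps)
  have B: "(\<Sum>i\<le>n. (-1)^Suc i * real (n choose Suc i) * f (Suc i))
      = (\<Sum>j\<le>Suc n. (-1)^j * real (n choose j) * f j) - f 0"
    using sum.atMost_Suc_shift[of "\<lambda>j. (-1)^j * real (n choose j) * f j" n] by simp
  have C: "(\<Sum>j\<le>Suc n. (-1)^j * real (n choose j) * f j) = (\<Sum>j\<le>n. (-1)^j * real (n choose j) * f j)"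
    by simp
  show ?thesis unfolding A B C by (simp add: sum_subtractf sum_negf algebra_simps)
qed

lemma fin_diff_poly:
  fixes P :: "real poly"
  shows "degree P < n \<Longrightarrow> (\<Sum>j\<le>n. (-1)^j * real (n choose j) * poly P (real j)) = 0"
proof (induction n arbitrary: P)
  case 0 then show ?case by simp
next
  case (Suc n)
  define Q where "Q = P - pcompose P [:1,1:]"
  have pQ: "poly Q (real j) = poly P (real j) - poly P (real (Suc j))" for j
    by (simp add: Q_def poly_pcompose add.commute)
  have eq: "(\<Sum>j\<le>Suc n. (-1)^j * real (Suc n choose j) * poly P (real j))
      = (\<Sum>j\<le>n. (-1)^j * real (n choose j) * poly Q (real j))"
    unfolding pQ by (rule fin_diff_step)
  show ?case
  proof (cases "degree P = 0")
    case True
    then obtain c where "P = [:c:]" by (metis degree_eq_zeroE)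
    then have "Q = 0" by (simp add: Q_def)
    then show ?thesis using eq by simp
  next
    case False
    then have "degree Q < n" using shift_degree_less[of P] Suc.prems by (simp add: Q_def)
    then show ?thesis using eq Suc.IH by simp
  qed
qed


definition gc :: "real \<Rightarrow> real \<Rightarrow> nat \<Rightarrow> nat \<Rightarrow> real" where
  "gc p q n j = (-1) ^ (n - j)
       * (Gamma (q + real n) / Gamma (p + 2 * real n))
       * (Gamma (real n + 1) / (Gamma (real j + 1) * Gamma (real (n - j) + 1)))
       * (Gamma (p + real n + real j) / Gamma (q + real j))"

lemma jacobiG_eq: "jacobiG p q n x = (\<Sum>j\<le>n. gc p q n j * x ^ j)"
  by (simp add: jacobiG_def gc_def)

lemma poch_poly: "pochhammer (z + real j) k = poly (\<Prod>i\<in>{0..<k}. [:z + real i, 1:]) (real j)"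
  by (simp add: pochhammer_prod poly_prod algebra_simps)

lemma degree_lin_prod: "degree (\<Prod>i\<in>{0..<k}. [:z + real i, 1:]) \<le> k"
proof -
  have "degree (\<Prod>i\<in>{0..<k}. [:z + real i, 1:]) \<le> sum (degree \<circ> (\<lambda>i. [:z + real i, 1:])) {0..<k}"
    by (rule degree_prod_sum_le) simp
  also have "\<dots> = k" by simp
  finally show ?thesis .
qed

lemma GF: "Gamma (real n + 1) = fact n"
  using Gamma_fact[of n, where 'a=real] by (simp add: add.commute)

lemma sign_split: "j \<le> n \<Longrightarrow> (-1::real) ^ (n - j) = (-1) ^ n * (-1) ^ j"
proof -
  assume "j \<le> n"
  then have "(-1::real) ^ n = (-1) ^ (n - j) * (-1) ^ j" by (simp add: power_add[symmetric])
  then have "(-1::real) ^ n * (-1) ^ j = (-1) ^ (n - j) * ((-1) ^ j * (-1) ^ j)" by simp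
  also have "(-1::real) ^ j * (-1) ^ j = 1" by (simp add: power_add[symmetric] flip: power_mult_distrib)
  finally show ?thesis by simp
qed

lemma gc_Beta_term:
  fixes a :: real
  assumes a: "a > 0" and jn: "j \<le> n" and kn: "k < n"
  defines "p \<equiv> 1 + 2 * a" and "q \<equiv> 1 + a"
  defines "P \<equiv> (\<Prod>i\<in>{0..<k}. [:q + real i, 1:]) * (\<Prod>i\<in>{0..<n - 1 - k}. [:p + 1 + real k + real i, 1:])"
  shows "gc p q n j * Beta (q + real j + real k) q
       = (Gamma (q + real n) / Gamma (p + 2 * real n) * Gamma q * (-1) ^ n)
         * ((-1) ^ j * real (n choose j) * poly P (real j))"
proof -
  define z1 where "z1 = q + real j"
  define z2 where "z2 = p + 1 + real j + real k"
  define m where "m = n - 1 - k"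
  have z1: "z1 > 0" and z2: "z2 > 0" using a by (auto simp: z1_def z2_def p_def q_def)
  have nz1: "z1 \<notin> \<int>\<^sub>\<le>\<^sub>0" and nz2: "z2 \<notin> \<int>\<^sub>\<le>\<^sub>0" using z1 z2 by auto
  have P1: "pochhammer z1 k = Gamma (q + real j + real k) / Gamma (q + real j)"
    using pochhammer_Gamma[OF nz1, of k] by (simp add: z1_def)
  have e2: "z2 + real m = p + real n + real j" using kn by (simp add: z2_def m_def algebra_simps)
  have P2: "pochhammer z2 m = Gamma (p + real n + real j) / Gamma (p + 1 + real j + real k)"
  proof -
    have "pochhammer z2 m = Gamma (z2 + of_nat m) / Gamma z2" by (rule pochhammer_Gamma[OF nz2])
    also have "\<dots> = Gamma (p + real n + real j) / Gamma z2" by (simp only: of_nat_id e2)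
    finally show ?thesis by (simp add: z2_def)
  qed
  have C: "Gamma (real n + 1) / (Gamma (real j + 1) * Gamma (real (n - j) + 1)) = real (n choose j)"
    using jn GF[of "n - j"] by (simp add: GF binomial_fact of_nat_diff del: of_nat_diff_if)
  have B: "Beta (q + real j + real k) q = Gamma (q + real j + real k) * Gamma q / Gamma (p + 1 + real j + real k)"
    unfolding Beta_def by (simp add: p_def q_def algebra_simps)
  have PP: "poly P (real j) = pochhammer z1 k * pochhammer z2 m"
  proof -
    have "poly P (real j) = pochhammer (q + real j) k * pochhammer (p + 1 + real k + real j) (n - 1 - k)"
      unfolding P_def poly_mult poch_poly by (rule refl)
    moreover have "p + 1 + real k + real j = z2" by (simp add: z2_def)
    ultimately show ?thesis by (simp add: z1_def m_def)
  qed
  have g1: "Gamma (q + real j) \<noteq> 0" "Gamma (p + 1 + real j + real k) \<noteq> 0"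
    using Gamma_real_pos[OF z1] Gamma_real_pos[OF z2] by (auto simp: z1_def z2_def)
  show ?thesis
    unfolding PP P1 P2 gc_def B C sign_split[OF jn]
    using g1 by (simp add: field_simps)
qed

lemma gc_orth_moment:
  fixes a :: real
  assumes a: "a > 0" and kn: "k < n"
  shows "(\<Sum>j\<le>n. gc (1 + 2 * a) (1 + a) n j * Beta (1 + a + real j + real k) (1 + a)) = 0"
proof -
  define p where "p = 1 + 2 * a"
  define q where "q = 1 + a"
  define P where "P = (\<Prod>i\<in>{0..<k}. [:q + real i, 1:]) * (\<Prod>i\<in>{0..<n - 1 - k}. [:p + 1 + real k + real i, 1:])"
  define K where "K = Gamma (q + real n) / Gamma (p + 2 * real n) * Gamma q * (-1) ^ n"
  have dP: "degree P < n"
  proof -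
    have "degree P \<le> k + (n - 1 - k)"
      unfolding P_def by (rule order.trans[OF degree_mult_le add_mono[OF degree_lin_prod degree_lin_prod]])
    then show ?thesis using kn by simp
  qed
  have "(\<Sum>j\<le>n. gc p q n j * Beta (q + real j + real k) q)
      = (\<Sum>j\<le>n. K * ((-1) ^ j * real (n choose j) * poly P (real j)))"
    by (rule sum.cong) (use gc_Beta_term[OF a _ kn] in \<open>auto simp: p_def q_def P_def K_def\<close>)
  also have "\<dots> = K * (\<Sum>j\<le>n. (-1) ^ j * real (n choose j) * poly P (real j))"
    by (simp add: sum_distrib_left)
  also have "\<dots> = 0" using fin_diff_poly[OF dP] by simp
  finally show ?thesis by (simp add: p_def q_def)
qed


abbreviation "SS \<equiv> restrict_space lborel {0<..<(1::real)}"

lemma R_int: "set_integrable lborel {0<..<1::real} f \<longleftrightarrow> integrable SS f"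
  for f :: "real \<Rightarrow> real"
  by (simp add: set_integrable_def integrable_restrict_space)
lemma R_lint: "(LINT x:{0<..<1::real}|lborel. f x) = integral\<^sup>L SS f"
  for f :: "real \<Rightarrow> real"
  by (simp add: set_lebesgue_integral_def integral_restrict_space)
lemma R_meas: "set_borel_measurable lborel {0<..<1::real} f \<longleftrightarrow> f \<in> borel_measurable SS"
  for f :: "real \<Rightarrow> real"
  by (simp add: set_borel_measurable_def borel_measurable_restrict_space_iff)

definition L2 :: "'a measure \<Rightarrow> ('a \<Rightarrow> real) \<Rightarrow> ('a \<Rightarrow> real) \<Rightarrow> bool" where
  "L2 M \<rho> f \<longleftrightarrow> f \<in> borel_measurable M \<and> integrable M (\<lambda>x. \<rho> x * (f x)\<^sup>2)"

locale wsp =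
  fixes M :: "'a measure" and \<rho> :: "'a \<Rightarrow> real"
  assumes rho_meas[measurable]: "\<rho> \<in> borel_measurable M"
    and rho_nn: "\<And>x. x \<in> space M \<Longrightarrow> \<rho> x \<ge> 0"
begin

lemma L2_cross:
  assumes "L2 M \<rho> f" "L2 M \<rho> g"
  shows "integrable M (\<lambda>x. \<rho> x * f x * g x)"
proof (rule Bochner_Integration.integrable_bound)
  show "integrable M (\<lambda>x. \<rho> x * (f x)\<^sup>2 + \<rho> x * (g x)\<^sup>2)"
    using assms unfolding L2_def by auto
  have [measurable]: "f \<in> borel_measurable M" "g \<in> borel_measurable M" using assms unfolding L2_def by auto
  show "(\<lambda>x. \<rho> x * f x * g x) \<in> borel_measurable M" by measurable
  show "AE x in M. norm (\<rho> x * f x * g x) \<le> norm (\<rho> x * (f x)\<^sup>2 + \<rho> x * (g x)\<^sup>2)"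
  proof (rule AE_I2)
    fix x assume x: "x \<in> space M"
    have r: "\<rho> x \<ge> 0" using rho_nn[OF x] .
    have "0 \<le> (\<bar>f x\<bar> - \<bar>g x\<bar>)\<^sup>2" by simp
    then have "2 * (\<bar>f x\<bar> * \<bar>g x\<bar>) \<le> (f x)\<^sup>2 + (g x)\<^sup>2"
      by (simp add: power2_eq_square algebra_simps abs_mult_self_eq)
    moreover have "0 \<le> \<bar>f x\<bar> * \<bar>g x\<bar>" by simp
    ultimately have "\<bar>f x * g x\<bar> \<le> (f x)\<^sup>2 + (g x)\<^sup>2" unfolding abs_mult by linarith
    then have "\<rho> x * \<bar>f x * g x\<bar> \<le> \<rho> x * ((f x)\<^sup>2 + (g x)\<^sup>2)" using r by (rule mult_left_mono)
    then show "norm (\<rho> x * f x * g x) \<le> norm (\<rho> x * (f x)\<^sup>2 + \<rho> x * (g x)\<^sup>2)"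
      using r by (simp add: abs_mult algebra_simps)
  qed
qed

lemma L2_add:
  assumes "L2 M \<rho> f" "L2 M \<rho> g"
  shows "L2 M \<rho> (\<lambda>x. f x + g x)"
proof -
  have "integrable M (\<lambda>x. \<rho> x * (f x)\<^sup>2 + 2 * (\<rho> x * f x * g x) + \<rho> x * (g x)\<^sup>2)"
    using assms L2_cross[OF assms] unfolding L2_def by auto
  moreover have "(\<lambda>x. \<rho> x * (f x)\<^sup>2 + 2 * (\<rho> x * f x * g x) + \<rho> x * (g x)\<^sup>2) = (\<lambda>x. \<rho> x * (f x + g x)\<^sup>2)"
    by (auto simp: power2_eq_square algebra_simps)
  ultimately show ?thesis using assms unfolding L2_def by auto
qed

lemma L2_scale:
  assumes "L2 M \<rho> f"
  shows "L2 M \<rho> (\<lambda>x. c * f x)"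
proof -
  have "integrable M (\<lambda>x. c\<^sup>2 * (\<rho> x * (f x)\<^sup>2))" using assms unfolding L2_def by auto
  moreover have "(\<lambda>x. c\<^sup>2 * (\<rho> x * (f x)\<^sup>2)) = (\<lambda>x. \<rho> x * (c * f x)\<^sup>2)"
    by (auto simp: power2_eq_square algebra_simps)
  ultimately show ?thesis using assms unfolding L2_def by auto
qed

lemma L2_diff:
  assumes "L2 M \<rho> f" "L2 M \<rho> g"
  shows "L2 M \<rho> (\<lambda>x. f x - g x)"
  using L2_add[OF assms(1) L2_scale[OF assms(2), of "-1"]] by simp

definition ip where "ip f g = integral\<^sup>L M (\<lambda>x. \<rho> x * f x * g x)"

lemma ip_self: "ip f f = integral\<^sup>L M (\<lambda>x. \<rho> x * (f x)\<^sup>2)"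
  unfolding ip_def by (simp add: power2_eq_square mult.assoc)

lemma ip_self_nonneg: "ip f f \<ge> 0"
  unfolding ip_self by (rule integral_nonneg_AE) (auto intro!: AE_I2 rho_nn mult_nonneg_nonneg)

lemma ip_expand:
  assumes "L2 M \<rho> f" "L2 M \<rho> g"
  shows "ip (\<lambda>x. f x + t * g x) (\<lambda>x. f x + t * g x) = ip f f + 2 * t * ip f g + t\<^sup>2 * ip g g"
proof -
  have i1: "integrable M (\<lambda>x. \<rho> x * f x * f x)" "integrable M (\<lambda>x. \<rho> x * f x * g x)"
     "integrable M (\<lambda>x. \<rho> x * g x * g x)"
    using L2_cross[OF assms(1) assms(1)] L2_cross[OF assms(1) assms(2)] L2_cross[OF assms(2) assms(2)] by auto
  have "ip (\<lambda>x. f x + t * g x) (\<lambda>x. f x + t * g x)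
     = integral\<^sup>L M (\<lambda>x. \<rho> x * f x * f x + (2 * t) * (\<rho> x * f x * g x) + t\<^sup>2 * (\<rho> x * g x * g x))"
    unfolding ip_def by (rule Bochner_Integration.integral_cong) (auto simp: power2_eq_square algebra_simps)
  also have "\<dots> = ip f f + 2 * t * ip f g + t\<^sup>2 * ip g g"
    unfolding ip_def using i1 by (simp add: integral_add)
  finally show ?thesis .
qed

lemma ip_CS:
  assumes "L2 M \<rho> f" "L2 M \<rho> g"
  shows "\<bar>ip f g\<bar> \<le> sqrt (ip f f) * sqrt (ip g g)"
proof -
  have q: "0 \<le> ip f f + 2 * t * ip f g + t\<^sup>2 * ip g g" for t
    using ip_expand[OF assms, of t] ip_self_nonneg[of "\<lambda>x. f x + t * g x"] by simp
  have "(ip f g)\<^sup>2 \<le> ip f f * ip g g"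
  proof (cases "ip g g = 0")
    case True
    have "ip f g = 0"
    proof (rule ccontr)
      assume ne: "ip f g \<noteq> 0"
      have "0 \<le> ip f f + 2 * (- (ip f f + 1) / (2 * ip f g)) * ip f g"
        using q[of "- (ip f f + 1) / (2 * ip f g)"] True by simp
      also have "\<dots> = -1" using ne by (simp add: field_simps)
      finally show False by simp
    qed
    then show ?thesis using True by simp
  next
    case False
    then have pos: "ip g g > 0" using ip_self_nonneg[of g] by simp
    have "0 \<le> ip f f + 2 * (- ip f g / ip g g) * ip f g + (- ip f g / ip g g)\<^sup>2 * ip g g"
      by (rule q)
    also have "\<dots> = ip f f - (ip f g)\<^sup>2 / ip g g" using pos by (simp add: field_simps power2_eq_square)
    finally show ?thesis using pos by (simp add: field_simps)
  qed
  then have "sqrt ((ip f g)\<^sup>2) \<le> sqrt (ip f f * ip g g)" by (rule real_sqrt_le_mono)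
  then show ?thesis by (simp add: real_sqrt_mult)
qed

lemma triangle:
  assumes "L2 M \<rho> f" "L2 M \<rho> g"
  shows "sqrt (ip (\<lambda>x. f x + g x) (\<lambda>x. f x + g x)) \<le> sqrt (ip f f) + sqrt (ip g g)"
proof -
  have e: "ip (\<lambda>x. f x + g x) (\<lambda>x. f x + g x) = ip f f + 2 * ip f g + ip g g"
    using ip_expand[OF assms, of 1] by simp
  have a: "ip f f \<ge> 0" "ip g g \<ge> 0" by (rule ip_self_nonneg)+
  have "ip f f + 2 * ip f g + ip g g \<le> (sqrt (ip f f) + sqrt (ip g g))\<^sup>2"
    using ip_CS[OF assms] a by (simp add: power2_eq_square algebra_simps)
  then have "sqrt (ip f f + 2 * ip f g + ip g g) \<le> sqrt ((sqrt (ip f f) + sqrt (ip g g))\<^sup>2)"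
    by (rule real_sqrt_le_mono)
  then show ?thesis using e a by simp
qed


lemma L2_zero: "L2 M \<rho> (\<lambda>x. 0)"
  unfolding L2_def by simp

lemma L2_sum:
  assumes "finite J" "\<And>j. j \<in> J \<Longrightarrow> L2 M \<rho> (\<phi> j)"
  shows "L2 M \<rho> (\<lambda>x. \<Sum>j\<in>J. c j * \<phi> j x)"
  using assms
proof (induction J rule: finite_induct)
  case empty then show ?case by (simp add: L2_zero)
next
  case (insert j J)
  have "L2 M \<rho> (\<lambda>x. c j * \<phi> j x + (\<Sum>j\<in>J. c j * \<phi> j x))"
    by (rule L2_add[OF L2_scale]) (use insert in auto)
  then show ?case using insert by simp
qed

lemma ip_comm: "ip f g = ip g f"
  unfolding ip_def by (simp add: mult_ac)

lemma ip_sum_right: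
  assumes "finite J" "L2 M \<rho> f" "\<And>j. j \<in> J \<Longrightarrow> L2 M \<rho> (\<phi> j)"
  shows "ip f (\<lambda>x. \<Sum>j\<in>J. c j * \<phi> j x) = (\<Sum>j\<in>J. c j * ip f (\<phi> j))"
proof -
  have "ip f (\<lambda>x. \<Sum>j\<in>J. c j * \<phi> j x) = integral\<^sup>L M (\<lambda>x. \<Sum>j\<in>J. c j * (\<rho> x * f x * \<phi> j x))"
    unfolding ip_def by (simp add: sum_distrib_left mult_ac)
  also have "\<dots> = (\<Sum>j\<in>J. integral\<^sup>L M (\<lambda>x. c j * (\<rho> x * f x * \<phi> j x)))"
    by (rule Bochner_Integration.integral_sum) (use L2_cross[OF assms(2) assms(3)] in auto)
  also have "\<dots> = (\<Sum>j\<in>J. c j * ip f (\<phi> j))"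
    unfolding ip_def by simp
  finally show ?thesis .
qed

lemma orth_sum:
  assumes J: "finite J" and L: "\<And>j. j \<in> J \<Longrightarrow> L2 M \<rho> (\<phi> j)"
    and O: "\<And>i j. i \<in> J \<Longrightarrow> j \<in> J \<Longrightarrow> i \<noteq> j \<Longrightarrow> ip (\<phi> i) (\<phi> j) = 0"
  shows "ip (\<lambda>x. \<Sum>j\<in>J. c j * \<phi> j x) (\<lambda>x. \<Sum>j\<in>J. d j * \<phi> j x) = (\<Sum>j\<in>J. c j * d j * ip (\<phi> j) (\<phi> j))"
proof -
  have LS: "L2 M \<rho> (\<lambda>x. \<Sum>j\<in>J. c j * \<phi> j x)" by (rule L2_sum[OF J L])
  have "ip (\<lambda>x. \<Sum>j\<in>J. c j * \<phi> j x) (\<lambda>x. \<Sum>j\<in>J. d j * \<phi> j x)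
      = (\<Sum>i\<in>J. d i * ip (\<lambda>x. \<Sum>j\<in>J. c j * \<phi> j x) (\<phi> i))"
    by (rule ip_sum_right[OF J LS L])
  also have "\<dots> = (\<Sum>i\<in>J. d i * (\<Sum>j\<in>J. c j * ip (\<phi> i) (\<phi> j)))"
  proof (rule sum.cong[OF refl])
    fix i assume i: "i \<in> J"
    have "ip (\<lambda>x. \<Sum>j\<in>J. c j * \<phi> j x) (\<phi> i) = ip (\<phi> i) (\<lambda>x. \<Sum>j\<in>J. c j * \<phi> j x)"
      by (rule ip_comm)
    also have "\<dots> = (\<Sum>j\<in>J. c j * ip (\<phi> i) (\<phi> j))" by (rule ip_sum_right[OF J L[OF i] L])
    finally show "d i * ip (\<lambda>x. \<Sum>j\<in>J. c j * \<phi> j x) (\<phi> i) = d i * (\<Sum>j\<in>J. c j * ip (\<phi> i) (\<phi> j))"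
      by simp
  qed
  also have "\<dots> = (\<Sum>i\<in>J. d i * (c i * ip (\<phi> i) (\<phi> i)))"
  proof (rule sum.cong[OF refl])
    fix i assume i: "i \<in> J"
    have "(\<Sum>j\<in>J. c j * ip (\<phi> i) (\<phi> j)) = c i * ip (\<phi> i) (\<phi> i) + (\<Sum>j\<in>J - {i}. c j * ip (\<phi> i) (\<phi> j))"
      by (rule sum.remove[OF J i])
    also have "(\<Sum>j\<in>J - {i}. c j * ip (\<phi> i) (\<phi> j)) = 0"
      by (rule sum.neutral) (use O i in auto)
    finally show "d i * (\<Sum>j\<in>J. c j * ip (\<phi> i) (\<phi> j)) = d i * (c i * ip (\<phi> i) (\<phi> i))" by simp
  qed
  finally show ?thesis by (simp add: mult_ac)
qed

lemma bessel:
  assumes J: "finite J" and L: "\<And>j. j \<in> J \<Longrightarrow> L2 M \<rho> (\<phi> j)"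
    and O: "\<And>i j. i \<in> J \<Longrightarrow> j \<in> J \<Longrightarrow> i \<noteq> j \<Longrightarrow> ip (\<phi> i) (\<phi> j) = 0"
    and f: "L2 M \<rho> f"
  shows "(\<Sum>j\<in>J. (ip (\<phi> j) f / ip (\<phi> j) (\<phi> j))\<^sup>2 * ip (\<phi> j) (\<phi> j)) \<le> ip f f"
proof -
  define c where "c j = ip (\<phi> j) f / ip (\<phi> j) (\<phi> j)" for j
  define T where "T = (\<lambda>x. \<Sum>j\<in>J. c j * \<phi> j x)"
  have LT: "L2 M \<rho> T" unfolding T_def by (rule L2_sum[OF J L])
  have key: "c j * ip (\<phi> j) f = (c j)\<^sup>2 * ip (\<phi> j) (\<phi> j)" for j
    by (cases "ip (\<phi> j) (\<phi> j) = 0") (auto simp: c_def power2_eq_square)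
  have "0 \<le> ip (\<lambda>x. f x + (-1) * T x) (\<lambda>x. f x + (-1) * T x)" by (rule ip_self_nonneg)
  also have "\<dots> = ip f f - 2 * ip f T + ip T T" using ip_expand[OF f LT, of "-1"] by simp
  also have "ip f T = (\<Sum>j\<in>J. c j * ip (\<phi> j) f)"
  proof -
    have "ip f T = (\<Sum>j\<in>J. c j * ip f (\<phi> j))" unfolding T_def by (rule ip_sum_right[OF J f L])
    also have "\<dots> = (\<Sum>j\<in>J. c j * ip (\<phi> j) f)"
      by (rule sum.cong[OF refl]) (subst ip_comm, rule refl)
    finally show ?thesis .
  qed
  also have "ip T T = (\<Sum>j\<in>J. (c j)\<^sup>2 * ip (\<phi> j) (\<phi> j))"
    unfolding T_def by (simp add: orth_sum[OF J L O] power2_eq_square)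
  finally have "0 \<le> ip f f - 2 * (\<Sum>j\<in>J. c j * ip (\<phi> j) f) + (\<Sum>j\<in>J. (c j)\<^sup>2 * ip (\<phi> j) (\<phi> j))" .
  moreover have "(\<Sum>j\<in>J. c j * ip (\<phi> j) f) = (\<Sum>j\<in>J. (c j)\<^sup>2 * ip (\<phi> j) (\<phi> j))"
    by (rule sum.cong[OF refl]) (rule key)
  ultimately have "(\<Sum>j\<in>J. (c j)\<^sup>2 * ip (\<phi> j) (\<phi> j)) \<le> ip f f" by linarith
  then show ?thesis by (simp only: c_def)
qed

end


lemma cos_neg:
  assumes "1 < (\<alpha>::real)" "\<alpha> < 2"
  shows "cos (pi * \<alpha> / 2) < 0"
proof -
  define y where "y = pi * (\<alpha> - 1) / 2"
  have y: "0 < y" "y < pi/2" using assms by (auto simp: y_def)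
  have "pi * \<alpha> / 2 = y + pi/2" by (simp add: y_def field_simps)
  then have "cos (pi * \<alpha> / 2) = cos (y + pi/2)" by (rule arg_cong)
  also have "\<dots> = - sin y" using minus_sin_cos_eq[of y] by simp
  finally show ?thesis using sin_gt_zero2[OF y] by simp
qed

lemma Gamma_plus1_pos: "(z::real) > 0 \<Longrightarrow> Gamma (z + 1) = z * Gamma z"
  by (rule Gamma_plus1) auto

lemma Gamma_ratio_lower:
  fixes x \<beta> :: real
  assumes x: "x > 0" and b: "0 < \<beta>" "\<beta> < 1"
  shows "Gamma x * x powr (1 + \<beta>) \<le> Gamma (x + 1 + \<beta>)"
proof -
  let ?L = "\<lambda>z. ln (Gamma z)"
  have xb: "x + \<beta> > 0" using x b by simp
  have cv: "?L ((1 - (1-\<beta>)) *\<^sub>R (x + \<beta>) + (1-\<beta>) *\<^sub>R (x + \<beta> + 1))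
      \<le> (1 - (1-\<beta>)) * ?L (x + \<beta>) + (1-\<beta>) * ?L (x + \<beta> + 1)"
    using convex_onD[OF log_convex_Gamma_real, of "1-\<beta>" "x+\<beta>" "x+\<beta>+1"] b xb by (simp add: o_def)
  have e1: "(1 - (1-\<beta>)) *\<^sub>R (x + \<beta>) + (1-\<beta>) *\<^sub>R (x + \<beta> + 1) = x + 1"
    by (simp add: algebra_simps)
  have l1: "?L (x + 1) = ln x + ?L x" using Gamma_plus1_pos[OF x] x Gamma_real_pos[OF x] by (simp add: ln_mult less_imp_neq[symmetric])
  have l2: "?L (x + \<beta> + 1) = ln (x + \<beta>) + ?L (x + \<beta>)" using Gamma_plus1_pos[OF xb] xb Gamma_real_pos[OF xb] by (simp add: ln_mult less_imp_neq[symmetric])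
  have d: "ln x + ?L x \<le> ?L (x + \<beta>) + (1 - \<beta>) * ln (x + \<beta>)"
    using cv unfolding e1 l1 l2 by (simp add: algebra_simps)
  have lx: "ln x \<le> ln (x + \<beta>)" using x b by simp
  have "?L x + (1 + \<beta>) * ln x \<le> ln (x + \<beta>) + ?L (x + \<beta>)"
  proof -
    have "\<beta> * ln x \<le> \<beta> * ln (x + \<beta>)" using lx b by (simp add: mult_left_mono)
    then show ?thesis using d by (simp add: algebra_simps)
  qed
  also have "\<dots> = ?L (x + 1 + \<beta>)" using l2 by (simp add: add_ac)
  finally have "ln (Gamma x * x powr (1 + \<beta>)) \<le> ln (Gamma (x + 1 + \<beta>))"
    using x Gamma_real_pos[OF x] by (simp add: ln_mult ln_powr less_imp_neq[symmetric])
  then show ?thesis using x xb by (subst (asm) ln_le_cancel_iff) auto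
qed


lemma moment:
  fixes a :: real assumes a: "a > 0"
  shows "integrable SS (\<lambda>x. x powr a * (1 - x) powr a * x ^ m)"
    and "integral\<^sup>L SS (\<lambda>x. x powr a * (1 - x) powr a * x ^ m) = Beta (1 + a + real m) (1 + a)"
proof -
  have i1: "set_integrable lborel {0..1} (\<lambda>t. t powr (1 + a + real m - 1) * (1 - t) powr (1 + a - 1))"
    by (rule integrable_Beta) (use a in auto)
  have i2: "set_integrable lborel {0<..<1::real} (\<lambda>t. t powr (1 + a + real m - 1) * (1 - t) powr (1 + a - 1))"
    by (rule set_integrable_subset[OF i1]) auto
  have eq: "t powr (1 + a + real m - 1) * (1 - t) powr (1 + a - 1) = t powr a * (1 - t) powr a * t ^ m"
    if "t \<in> {0<..<1}" for t :: real
  proof -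
    have "t powr (a + real m) = t powr a * t powr real m" by (rule powr_add)
    also have "t powr real m = t ^ m" using that by (simp add: powr_realpow)
    finally have "t powr (a + real m) = t powr a * t ^ m" .
    then show ?thesis by (simp add: algebra_simps)
  qed
  have i3: "set_integrable lborel {0<..<1::real} (\<lambda>t. t powr a * (1 - t) powr a * t ^ m)"
    using i2 by (subst (asm) set_integrable_cong[OF refl refl eq]) auto
  then show "integrable SS (\<lambda>x. x powr a * (1 - x) powr a * x ^ m)" by (simp add: R_int)
  have "(LINT t:{0<..<1::real}|lborel. t powr a * (1 - t) powr a * t ^ m)
      = (LINT t:{0<..<1::real}|lborel. t powr (1 + a + real m - 1) * (1 - t) powr (1 + a - 1))"
    by (rule set_lebesgue_integral_cong) (simp, use eq in metis)
  also have "\<dots> = integral {0<..<1} (\<lambda>t. t powr (1 + a + real m - 1) * (1 - t) powr (1 + a - 1))"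
    by (rule set_borel_integral_eq_integral(2)[OF i2])
  also have "\<dots> = integral {0..1} (\<lambda>t. t powr (1 + a + real m - 1) * (1 - t) powr (1 + a - 1))"
    by (simp add: integral_open_interval_real)
  also have "\<dots> = Beta (1 + a + real m) (1 + a)"
    by (rule integral_unique[OF has_integral_Beta_real]) (use a in auto)
  finally show "integral\<^sup>L SS (\<lambda>x. x powr a * (1 - x) powr a * x ^ m) = Beta (1 + a + real m) (1 + a)"
    by (simp add: R_lint)
qed


lemma G_moment:
  fixes a :: real assumes a: "a > 0"
  shows "integrable SS (\<lambda>x. x powr a * (1 - x) powr a * jacobiG (1 + 2 * a) (1 + a) n x * x ^ k)"
    and "k < n \<Longrightarrow> integral\<^sup>L SS (\<lambda>x. x powr a * (1 - x) powr a * jacobiG (1 + 2 * a) (1 + a) n x * x ^ k) = 0"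
proof -
  have eq: "(\<lambda>x. x powr a * (1 - x) powr a * jacobiG (1 + 2 * a) (1 + a) n x * x ^ k)
      = (\<lambda>x. \<Sum>j\<le>n. gc (1 + 2 * a) (1 + a) n j * (x powr a * (1 - x) powr a * x ^ (j + k)))"
    by (rule ext) (simp add: jacobiG_eq sum_distrib_left sum_distrib_right power_add algebra_simps)
  have int: "integrable SS (\<lambda>x. gc (1 + 2 * a) (1 + a) n j * (x powr a * (1 - x) powr a * x ^ (j + k)))" for j
    using moment(1)[OF a, of "j + k"] by simp
  show "integrable SS (\<lambda>x. x powr a * (1 - x) powr a * jacobiG (1 + 2 * a) (1 + a) n x * x ^ k)"
    unfolding eq by (intro Bochner_Integration.integrable_sum int)
  assume kn: "k < n"
  have "integral\<^sup>L SS (\<lambda>x. x powr a * (1 - x) powr a * jacobiG (1 + 2 * a) (1 + a) n x * x ^ k)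
     = (\<Sum>j\<le>n. gc (1 + 2 * a) (1 + a) n j * Beta (1 + a + real (j + k)) (1 + a))"
    unfolding eq using int by (simp add: integral_sum moment(2)[OF a])
  also have "\<dots> = 0" using gc_orth_moment[OF a kn] by (simp add: add_ac)
  finally show "integral\<^sup>L SS (\<lambda>x. x powr a * (1 - x) powr a * jacobiG (1 + 2 * a) (1 + a) n x * x ^ k) = 0" .
qed

lemma G_prod:
  fixes a :: real assumes a: "a > 0"
  shows "integrable SS (\<lambda>x. x powr a * (1 - x) powr a * jacobiG (1 + 2 * a) (1 + a) i x * jacobiG (1 + 2 * a) (1 + a) n x)"
    and "i < n \<Longrightarrow> integral\<^sup>L SS (\<lambda>x. x powr a * (1 - x) powr a * jacobiG (1 + 2 * a) (1 + a) i x * jacobiG (1 + 2 * a) (1 + a) n x) = 0"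
proof -
  let ?J = "jacobiG (1 + 2 * a) (1 + a)"
  have eq: "(\<lambda>x. x powr a * (1 - x) powr a * ?J i x * ?J n x)
      = (\<lambda>x. \<Sum>k\<le>i. gc (1 + 2 * a) (1 + a) i k * (x powr a * (1 - x) powr a * ?J n x * x ^ k))"
    by (rule ext) (simp add: jacobiG_eq[of _ _ i] sum_distrib_left sum_distrib_right algebra_simps)
  have int: "integrable SS (\<lambda>x. gc (1 + 2 * a) (1 + a) i k * (x powr a * (1 - x) powr a * ?J n x * x ^ k))" for k
    using G_moment(1)[OF a, of n k] by simp
  show "integrable SS (\<lambda>x. x powr a * (1 - x) powr a * ?J i x * ?J n x)"
    unfolding eq by (intro Bochner_Integration.integrable_sum int)
  assume "i < n"
  then show "integral\<^sup>L SS (\<lambda>x. x powr a * (1 - x) powr a * ?J i x * ?J n x) = 0"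
    unfolding eq using int by (simp add: integral_sum G_moment(2)[OF a])
qed



theorem theorem6p2:
  fixes \<alpha> :: real and \<omega> :: "real \<Rightarrow> real" and G :: "nat \<Rightarrow> real \<Rightarrow> real"
    and lam :: "nat \<Rightarrow> real" and f u :: "real \<Rightarrow> real"
    and fc :: "nat \<Rightarrow> real" and uN :: "nat \<Rightarrow> real \<Rightarrow> real"
  assumes "1 < \<alpha>" and "\<alpha> < 2"
    and "\<And>x. \<omega> x = x powr (\<alpha> / 2) * (1 - x) powr (\<alpha> / 2)"
    and "\<And>j x. G j x = jacobiG (1 + \<alpha>) (1 + \<alpha> / 2) j x"
    and "\<And>j. lam j = - cos (pi * \<alpha> / 2) * Gamma (real j + 1 + \<alpha>) / Gamma (real j + 1)"
    and "in_L2w \<omega> f"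
    and "\<And>j. fc j = (LINT x:{0<..<1}|lborel. \<omega> x * G j x * f x)"
    and "\<And>N x. uN N x = \<omega> x * (\<Sum>j\<le>N. fc j / (lam j * (wnorm \<omega> (G j))\<^sup>2) * G j x)"
    and "in_L2w (\<lambda>x. 1 / \<omega> x) u"
    and "(\<lambda>N. wnorm (\<lambda>x. 1 / \<omega> x) (\<lambda>x. u x - uN N x)) \<longlonglongrightarrow> 0"
  shows "\<exists>C>0. \<forall>N. wnorm (\<lambda>x. 1 / \<omega> x) (\<lambda>x. u x - uN N x) \<le> 1 / lam (N + 1) * wnorm \<omega> f
              \<and> 1 / lam (N + 1) * wnorm \<omega> f \<le> C * (real N + 2) powr (- \<alpha>) * wnorm \<omega> f"
proof -
  define a where "a = \<alpha> / 2"
  have a: "a > 0" using assms(1) by (simp add: a_def)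
  have wdef: "\<omega> = (\<lambda>x. x powr a * (1 - x) powr a)" using assms(3) by (simp add: a_def fun_eq_iff)
  have Gdef: "G j = jacobiG (1 + 2 * a) (1 + a) j" for j using assms(4) by (simp add: a_def fun_eq_iff)
  have wnn: "\<omega> x \<ge> 0" for x unfolding wdef by simp
  have wpos: "\<omega> x > 0" if "x \<in> space SS" for x using that unfolding wdef by (simp add: space_restrict_space)
  have "(\<lambda>x::real. x powr a * (1 - x) powr a) \<in> borel_measurable borel" by measurable
  then have wmeas[measurable]: "\<omega> \<in> borel_measurable SS" unfolding wdef
    by (intro measurable_restrict_space1) simp
  have "jacobiG (1 + 2 * a) (1 + a) j \<in> borel_measurable borel" for j unfolding jacobiG_def by measurable
  then have Gmeas[measurable]: "G j \<in> borel_measurable SS" for j unfolding Gdef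
    by (intro measurable_restrict_space1) simp
  interpret W: wsp SS \<omega> by unfold_locales (auto simp: wnn)
  interpret V: wsp SS "\<lambda>x. 1 / \<omega> x" by unfold_locales (auto simp: wnn)
  have SS_def': "space SS = {0<..<1}" by (simp add: space_restrict_space)
  have LG: "L2 SS \<omega> (G j)" for j
  proof -
    have "integrable SS (\<lambda>x. x powr a * (1 - x) powr a * jacobiG (1 + 2 * a) (1 + a) j x * jacobiG (1 + 2 * a) (1 + a) j x)"
      by (rule G_prod(1)[OF a])
    moreover have "(\<lambda>x. \<omega> x * (G j x)\<^sup>2) = (\<lambda>x. x powr a * (1 - x) powr a * jacobiG (1 + 2 * a) (1 + a) j x * jacobiG (1 + 2 * a) (1 + a) j x)"
      by (simp add: wdef Gdef power2_eq_square mult_ac)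
    ultimately show ?thesis unfolding L2_def by simp
  qed
  have orth: "W.ip (G i) (G j) = 0" if "i \<noteq> j" for i j
  proof -
    have *: "W.ip (G i) (G j) = 0" if "i < j" for i j
    proof -
      have "W.ip (G i) (G j) = integral\<^sup>L SS (\<lambda>x. x powr a * (1 - x) powr a * jacobiG (1 + 2 * a) (1 + a) i x * jacobiG (1 + 2 * a) (1 + a) j x)"
        unfolding W.ip_def by (simp add: wdef Gdef)
      also have "\<dots> = 0" by (rule G_prod(2)[OF a that])
      finally show ?thesis .
    qed
    show ?thesis using that *[of i j] *[of j i] W.ip_comm[of "G i" "G j"] by (cases "i < j") auto
  qed
  have Lf: "L2 SS \<omega> f" using assms(6) unfolding in_L2w_def L2_def by (simp add: R_meas R_int)
  have Lu: "L2 SS (\<lambda>x. 1 / \<omega> x) u" using assms(9) unfolding in_L2w_def L2_def by (simp add: R_meas R_int)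
  have fc_ip: "fc j = W.ip (G j) f" for j unfolding assms(7) W.ip_def R_lint ..
  define h where "h j = W.ip (G j) (G j)" for j
  have h_nn: "h j \<ge> 0" for j unfolding h_def by (rule W.ip_self_nonneg)
  have h_eq: "(wnorm \<omega> (G j))\<^sup>2 = h j" for j
    unfolding wnorm_def R_lint h_def W.ip_self[symmetric] using W.ip_self_nonneg by simp
  have wnf: "wnorm \<omega> f = sqrt (W.ip f f)" unfolding wnorm_def R_lint W.ip_self ..
  have wnV: "wnorm (\<lambda>x. 1 / \<omega> x) F = sqrt (V.ip F F)" for F unfolding wnorm_def R_lint V.ip_self ..
  define c where "c j = fc j / h j" for j
  have Bes: "(\<Sum>j\<le>M. (c j)\<^sup>2 * h j) \<le> W.ip f f" for M
    using W.bessel[of "{..M}" G f] LG orth Lf by (simp add: c_def fc_ip h_def)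
  define c0 where "c0 = - cos (pi * \<alpha> / 2)"
  have c0: "c0 > 0" using cos_neg[OF assms(1,2)] by (simp add: c0_def)
  have lamdef: "lam j = c0 * Gamma (real j + 1 + \<alpha>) / Gamma (real j + 1)" for j
    using assms(5) by (simp add: c0_def)
  have lam_pos: "lam j > 0" for j
  proof -
    have "Gamma (real j + 1 + \<alpha>) > 0" "Gamma (real j + 1) > 0" using assms(1) by auto
    then show ?thesis using c0 by (simp add: lamdef)
  qed
  have lam_step: "lam j \<le> lam (Suc j)" for j
  proof -
    have p1: "real j + 1 + \<alpha> > 0" "real j + 1 > 0" using assms(1) by auto
    have "Gamma (real (Suc j) + 1 + \<alpha>) = (real j + 1 + \<alpha>) * Gamma (real j + 1 + \<alpha>)"
      using Gamma_plus1_pos[OF p1(1)] by (simp add: add_ac)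
    moreover have "Gamma (real (Suc j) + 1) = (real j + 1) * Gamma (real j + 1)"
      using Gamma_plus1_pos[OF p1(2)] by (simp add: add_ac)
    ultimately have e: "lam (Suc j) = lam j * ((real j + 1 + \<alpha>) / (real j + 1))"
      unfolding lamdef by (simp add: field_simps)
    have t: "(real j + 1 + \<alpha>) / (real j + 1) \<ge> 1" using assms(1) by simp
    have "lam j * 1 \<le> lam j * ((real j + 1 + \<alpha>) / (real j + 1))"
      by (rule mult_left_mono[OF t]) (use lam_pos[of j] in simp)
    then show ?thesis by (simp add: e)
  qed
  have lam_mono: "lam i \<le> lam j" if "i \<le> j" for i j
    using lift_Suc_mono_le[of lam, OF lam_step that] .
  have lam_lower: "c0 * (real N + 2) powr \<alpha> \<le> lam (N + 1)" for N
  proof -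
    define x where "x = real N + 2"
    have x: "x > 0" by (simp add: x_def)
    have g: "Gamma x * x powr (1 + (\<alpha> - 1)) \<le> Gamma (x + 1 + (\<alpha> - 1))"
      by (rule Gamma_ratio_lower[OF x]) (use assms(1,2) in auto)
    have gx: "Gamma x > 0" using x by simp
    have "lam (N + 1) = c0 * (Gamma (x + \<alpha>) / Gamma x)"
      unfolding lamdef by (simp add: x_def add_ac)
    moreover have "x powr \<alpha> \<le> Gamma (x + \<alpha>) / Gamma x"
      using g gx by (simp add: field_simps)
    ultimately show ?thesis using c0 mult_left_mono[of "x powr \<alpha>" "Gamma (x + \<alpha>) / Gamma x" c0]
      by (simp add: x_def)
  qed
  define d where "d j = fc j / (lam j * h j)" for j
  have uN_eq: "uN K = (\<lambda>x. \<omega> x * (\<Sum>j\<le>K. d j * G j x))" for K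
    by (rule ext) (simp add: assms(8) h_eq d_def)
  have Ls: "L2 SS \<omega> (\<lambda>x. \<Sum>j\<in>K. d j * G j x)" if "finite K" for K
    by (rule W.L2_sum[OF that LG])
  have conv: "L2 SS (\<lambda>x. 1 / \<omega> x) (\<lambda>x. \<omega> x * S x) \<and> V.ip (\<lambda>x. \<omega> x * S x) (\<lambda>x. \<omega> x * S x) = W.ip S S"
    if LS: "L2 SS \<omega> S" for S
  proof -
    have [measurable]: "S \<in> borel_measurable SS" using LS unfolding L2_def by simp
    have eqf: "1 / \<omega> x * (\<omega> x * S x)\<^sup>2 = \<omega> x * (S x)\<^sup>2" if "x \<in> space SS" for x
      using wpos[OF that] by (simp add: power2_eq_square field_simps)
    have "integrable SS (\<lambda>x. 1 / \<omega> x * (\<omega> x * S x)\<^sup>2)"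
      using LS unfolding L2_def by (subst Bochner_Integration.integrable_cong[OF refl eqf]) auto
    then have "L2 SS (\<lambda>x. 1 / \<omega> x) (\<lambda>x. \<omega> x * S x)" unfolding L2_def by simp
    moreover have "V.ip (\<lambda>x. \<omega> x * S x) (\<lambda>x. \<omega> x * S x) = W.ip S S"
      unfolding V.ip_self W.ip_self by (rule Bochner_Integration.integral_cong[OF refl eqf])
    ultimately show ?thesis by simp
  qed
  have LuN: "L2 SS (\<lambda>x. 1 / \<omega> x) (uN K)" for K
    unfolding uN_eq using conv[OF Ls[of "{..K}"]] by simp
  have diff_eq: "(\<lambda>x. uN M x - uN N x) = (\<lambda>x. \<omega> x * (\<Sum>j\<in>{N<..M}. d j * G j x))" if "N \<le> M" for N M
  proof (rule ext)
    fix x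
    have "{..M} - {..N} = {N<..M}" by auto
    then have "(\<Sum>j\<in>{N<..M}. d j * G j x) = (\<Sum>j\<le>M. d j * G j x) - (\<Sum>j\<le>N. d j * G j x)"
      using sum_diff[of "{..M}" "{..N}" "\<lambda>j. d j * G j x"] that by auto
    then show "uN M x - uN N x = \<omega> x * (\<Sum>j\<in>{N<..M}. d j * G j x)"
      by (simp add: uN_eq right_diff_distrib)
  qed
  have tail: "sqrt (V.ip (\<lambda>x. uN M x - uN N x) (\<lambda>x. uN M x - uN N x)) \<le> 1 / lam (N + 1) * wnorm \<omega> f"
    if NM: "N \<le> M" for N M
  proof -
    define L where "L = lam (N + 1)"
    have L: "L > 0" using lam_pos by (simp add: L_def)
    have "V.ip (\<lambda>x. uN M x - uN N x) (\<lambda>x. uN M x - uN N x)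
        = W.ip (\<lambda>x. \<Sum>j\<in>{N<..M}. d j * G j x) (\<lambda>x. \<Sum>j\<in>{N<..M}. d j * G j x)"
      unfolding diff_eq[OF NM] using conv[OF Ls[of "{N<..M}"]] by simp
    also have "\<dots> = (\<Sum>j\<in>{N<..M}. d j * d j * h j)"
      unfolding h_def by (rule W.orth_sum) (use LG orth in auto)
    also have "\<dots> \<le> (\<Sum>j\<in>{N<..M}. (c j)\<^sup>2 * h j / L\<^sup>2)"
    proof (rule sum_mono)
      fix j assume j: "j \<in> {N<..M}"
      have lj: "L \<le> lam j" unfolding L_def using j by (intro lam_mono) auto
      have "L\<^sup>2 \<le> (lam j)\<^sup>2" using lj L by (intro power_mono) auto
      moreover have "0 \<le> (c j)\<^sup>2 * h j" using h_nn by simp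
      ultimately have "(c j)\<^sup>2 * h j / (lam j)\<^sup>2 \<le> (c j)\<^sup>2 * h j / L\<^sup>2"
        using L lam_pos[of j] by (intro divide_left_mono) auto
      moreover have "d j * d j * h j = (c j)\<^sup>2 * h j / (lam j)\<^sup>2"
        by (simp add: d_def c_def power2_eq_square field_simps)
      ultimately show "d j * d j * h j \<le> (c j)\<^sup>2 * h j / L\<^sup>2" by simp
    qed
    also have "\<dots> = (\<Sum>j\<in>{N<..M}. (c j)\<^sup>2 * h j) / L\<^sup>2" by (simp add: sum_divide_distrib)
    also have "\<dots> \<le> (\<Sum>j\<le>M. (c j)\<^sup>2 * h j) / L\<^sup>2"
      by (intro divide_right_mono sum_mono2) (use h_nn in auto)
    also have "\<dots> \<le> W.ip f f / L\<^sup>2"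
      by (intro divide_right_mono Bes) simp
    finally have "sqrt (V.ip (\<lambda>x. uN M x - uN N x) (\<lambda>x. uN M x - uN N x)) \<le> sqrt (W.ip f f / L\<^sup>2)"
      by (rule real_sqrt_le_mono)
    also have "\<dots> = 1 / L * wnorm \<omega> f" using L by (simp add: wnf real_sqrt_divide)
    finally show ?thesis by (simp add: L_def)
  qed
  have part1: "wnorm (\<lambda>x. 1 / \<omega> x) (\<lambda>x. u x - uN N x) \<le> 1 / lam (N + 1) * wnorm \<omega> f" for N
  proof -
    let ?r = "\<lambda>M. wnorm (\<lambda>x. 1 / \<omega> x) (\<lambda>x. u x - uN M x)"
    have "wnorm (\<lambda>x. 1 / \<omega> x) (\<lambda>x. u x - uN N x) - 1 / lam (N + 1) * wnorm \<omega> f \<le> 0"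
    proof (rule LIMSEQ_le_const[OF assms(10)], intro exI allI impI)
      fix M assume NM: "N \<le> M"
      have L1: "L2 SS (\<lambda>x. 1 / \<omega> x) (\<lambda>x. u x - uN M x)" by (rule V.L2_diff[OF Lu LuN])
      have L2': "L2 SS (\<lambda>x. 1 / \<omega> x) (\<lambda>x. uN M x - uN N x)" by (rule V.L2_diff[OF LuN LuN])
      have e: "(\<lambda>x. (u x - uN M x) + (uN M x - uN N x)) = (\<lambda>x. u x - uN N x)" by auto
      have "wnorm (\<lambda>x. 1 / \<omega> x) (\<lambda>x. u x - uN N x)
          \<le> ?r M + sqrt (V.ip (\<lambda>x. uN M x - uN N x) (\<lambda>x. uN M x - uN N x))"
        using V.triangle[OF L1 L2'] unfolding e wnV .
      also have "\<dots> \<le> ?r M + 1 / lam (N + 1) * wnorm \<omega> f" using tail[OF NM] by simp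
      finally show "wnorm (\<lambda>x. 1 / \<omega> x) (\<lambda>x. u x - uN N x) - 1 / lam (N + 1) * wnorm \<omega> f \<le> ?r M"
        by simp
    qed
    then show ?thesis by simp
  qed
  have part2: "1 / lam (N + 1) * wnorm \<omega> f \<le> (1 / c0) * (real N + 2) powr (- \<alpha>) * wnorm \<omega> f" for N
  proof -
    have pos: "c0 * (real N + 2) powr \<alpha> > 0" using c0 by simp
    have "1 / lam (N + 1) \<le> 1 / (c0 * (real N + 2) powr \<alpha>)"
      by (rule divide_left_mono[OF lam_lower]) (use pos lam_pos[of "Suc N"] in auto)
    also have "\<dots> = (1 / c0) * (real N + 2) powr (- \<alpha>)" by (simp add: powr_minus field_simps)
    finally show ?thesis by (rule mult_right_mono) (simp add: wnf W.ip_self_nonneg)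
  qed
  show ?thesis
    by (rule exI[of _ "1 / c0"]) (use c0 part1 part2 in auto)
qed

end
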